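(* Let $\zeta\equiv\Phi$ or $\zeta\equiv1$, $t\ge0$, $n\in\mathbb N^*$, and $(x_1,\dots,x_n)\in\mathbb X^n$, $x_i=(t_i,\theta_i)$, with $0<t_1<\dots<t_n\le t$. Then $$\int_{\mathbb{R}_+^n}c_n^{\zeta,t}(x_1,\dots,x_n)\,d\theta_1\cdots d\theta_n=\mu\,\zeta(t-t_n)\prod_{i=2}^n\Phi(t_i-t_{i-1}),$$ with the convention that an empty product equals $1$.
   Context: Let $\mu>0$ and $\Phi:\mathbb{R}_+\to\mathbb{R}_+$ integrable with $\int_0^\infty\Phi<1$. Let $\mathbb X=\mathbb{R}_+\times\mathbb{R}_+$, points $x=(t,\theta)$. Let $\Omega$ be the space of configurations $\omega=\sum_i\delta_{x_i}$ on $\mathbb X$ with $\mathbb P$ the Poisson measure making the canonical measure $N(\omega)=\omega$ a Poisson random measure of intensity $dt\,d\theta$. Let $\lambda$ be the unique pathwise solution of $\lambda_t=\mu+\int_{(0,t)\times\mathbb{R}_+}\Phi(t-s)\mathbf 1_{\{\theta\le\lambda_s\}}N(ds,d\theta)$, and for $\zeta\in\{\Phi,1\}$ set $X^\zeta_t:=\int_{(0,t)\times\mathbb{R}_+}\zeta(t-s)\mathbf 1_{\{\theta\le\lambda_s\}}N(ds,d\theta)$. For $x_1,\dots,x_n$ with $t_1<\dots<t_n$ and a functional $F$ of $\omega$, $\mathcal D^n_{(x_1,\dots,x_n)}F:=\sum_{J\subset\{x_1,\dots,x_n\}}(-1)^{n-|J|}F(\sum_{y\in J}\delta_y)$. Define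 $c_n^{\zeta,t}(x_1,\dots,x_n):=\mathcal D^n_{(x_{(1)},\dots,x_{(n)})}X^\zeta_t$, where $(x_{(1)},\dots,x_{(n)})$ is the reordering of $(x_1,\dots,x_n)$ by increasing time coordinate. *)

theory Defs
  imports "HOL-Analysis.Analysis"
begin

text \<open>Finite configurations on X = R+ x R+ are represented as finite sets of points
  (t, theta).\<close>

definition is_intensity :: "real \<Rightarrow> (real \<Rightarrow> real) \<Rightarrow> (real \<times> real) set \<Rightarrow> (real \<Rightarrow> real) \<Rightarrow> bool" where
  "is_intensity \<mu> \<Phi> J lam \<longleftrightarrow>
     (\<forall>s. lam s = \<mu> + (\<Sum>y\<in>{y\<in>J. 0 < fst y \<and> fst y < s}.
                         \<Phi> (s - fst y) * (if snd y \<le> lam (fst y) then 1 else 0)))"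

definition intensity :: "real \<Rightarrow> (real \<Rightarrow> real) \<Rightarrow> (real \<times> real) set \<Rightarrow> real \<Rightarrow> real" where
  "intensity \<mu> \<Phi> J = (THE lam. is_intensity \<mu> \<Phi> J lam)"

definition Xproc :: "real \<Rightarrow> (real \<Rightarrow> real) \<Rightarrow> (real \<Rightarrow> real) \<Rightarrow> real \<Rightarrow> (real \<times> real) set \<Rightarrow> real" where
  "Xproc \<mu> \<Phi> \<zeta> t J =
     (\<Sum>y\<in>{y\<in>J. 0 < fst y \<and> fst y \<le> t}.
        \<zeta> (t - fst y) * (if snd y \<le> intensity \<mu> \<Phi> J (fst y) then 1 else 0))"

definition Dn :: "((real \<times> real) set \<Rightarrow> real) \<Rightarrow> (real \<times> real) list \<Rightarrow> real" where
  "Dn F xs = (\<Sum>J\<in>Pow (set xs). (-1) ^ (length xs - card J) * F J)"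

definition cn :: "real \<Rightarrow> (real \<Rightarrow> real) \<Rightarrow> (real \<Rightarrow> real) \<Rightarrow> real \<Rightarrow> (real \<times> real) list \<Rightarrow> real" where
  "cn \<mu> \<Phi> \<zeta> t xs = Dn (Xproc \<mu> \<Phi> \<zeta> t) (sort_key fst xs)"

end

theory Submission
  imports Defs "HOL-Analysis.Analysis"
begin


definition Dl :: "nat set \<Rightarrow> (nat set \<Rightarrow> real) \<Rightarrow> real" where
  "Dl I f = (\<Sum>S\<in>Pow I. (-1) ^ (card I - card S) * f S)"

lemma Dl_insert:
  assumes "finite I" "m \<notin> I"
  shows "Dl (insert m I) f = Dl I (\<lambda>A. f (insert m A) - f A)"
proof -
  have inj: "inj_on (insert m) (Pow I)" using assms(2) unfolding inj_on_def by (meson PowD insert_ident subsetD)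
  have disj: "Pow I \<inter> insert m ` Pow I = {}" using assms(2) by auto
  have fin: "finite (Pow I)" using assms(1) by simp
  have "Dl (insert m I) f = (\<Sum>S\<in>Pow I. (-1) ^ (card (insert m I) - card S) * f S)
      + (\<Sum>S\<in>insert m ` Pow I. (-1) ^ (card (insert m I) - card S) * f S)"
    unfolding Dl_def Pow_insert by (rule sum.union_disjoint) (use fin disj in auto)
  also have "(\<Sum>S\<in>insert m ` Pow I. (-1) ^ (card (insert m I) - card S) * f S)
     = (\<Sum>A\<in>Pow I. (-1) ^ (card (insert m I) - card (insert m A)) * f (insert m A))"
    by (subst sum.reindex[OF inj]) simp
  also have "\<dots> = (\<Sum>A\<in>Pow I. (-1) ^ (card I - card A) * f (insert m A))"
  proof (rule sum.cong[OF refl])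
    fix A assume "A \<in> Pow I"
    then have "A \<subseteq> I" "finite A" "m \<notin> A" using assms finite_subset by auto
    then show "(-1) ^ (card (insert m I) - card (insert m A)) * f (insert m A) = (-1) ^ (card I - card A) * f (insert m A)"
      using assms by simp
  qed
  also have "(\<Sum>S\<in>Pow I. (-1) ^ (card (insert m I) - card S) * f S) = (\<Sum>A\<in>Pow I. - ((-1) ^ (card I - card A) * f A))"
  proof (rule sum.cong[OF refl])
    fix A assume "A \<in> Pow I"
    then have "A \<subseteq> I" "finite A" using assms finite_subset by auto
    then have le: "card A \<le> card I" using assms(1) card_mono by blast
    have "card (insert m I) - card A = Suc (card I - card A)" using assms le by simp
    then show "(-1) ^ (card (insert m I) - card A) * f A = - ((-1) ^ (card I - card A) * f A)"
      by simp
  qed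
  also have "(\<Sum>A\<in>Pow I. - ((-1) ^ (card I - card A) * f A)) + (\<Sum>A\<in>Pow I. (-1) ^ (card I - card A) * f (insert m A))
     = (\<Sum>A\<in>Pow I. (-1) ^ (card I - card A) * (f (insert m A) - f A))"
    by (simp only: sum.distrib[symmetric]) (rule sum.cong; simp add: right_diff_distrib)
  finally show ?thesis unfolding Dl_def .
qed

lemma Dl_const: "finite I \<Longrightarrow> I \<noteq> {} \<Longrightarrow> Dl I (\<lambda>_. c) = 0"
proof -
  assume "finite I" "I \<noteq> {}"
  then obtain m where m: "m \<in> I" by auto
  define J where "J = I - {m}"
  have "I = insert m J" "m \<notin> J" "finite J" using m \<open>finite I\<close> unfolding J_def by auto
  then have "Dl I (\<lambda>_. c) = Dl J (\<lambda>A. c - c)" using Dl_insert by blast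
  then show ?thesis by (simp add: Dl_def)
qed

lemma Dl_empty: "Dl {} f = f {}" by (simp add: Dl_def)

lemma Dl_add: "Dl I (\<lambda>S. f S + g S) = Dl I f + Dl I g"
  unfolding Dl_def by (simp add: distrib_left sum.distrib)

lemma Dl_cmult: "Dl I (\<lambda>S. c * f S) = c * Dl I f"
  unfolding Dl_def by (simp add: sum_distrib_left mult.left_commute)

function lamv :: "real \<Rightarrow> (real \<Rightarrow> real) \<Rightarrow> (nat \<Rightarrow> real) \<Rightarrow> nat set \<Rightarrow> (nat \<Rightarrow> real) \<Rightarrow> nat \<Rightarrow> real" where
  "lamv \<mu> \<Phi> tt S \<theta> i = \<mu> + (\<Sum>j<i. if j \<in> S then \<Phi> (tt i - tt j) * (if \<theta> j \<le> lamv \<mu> \<Phi> tt S \<theta> j then 1 else 0) else 0)"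
  by pat_completeness auto
termination by (relation "Wellfounded.measure (\<lambda>(\<mu>,\<Phi>,tt,S,\<theta>,i). i)") auto

declare lamv.simps[simp del]

lemma lamv_cong:
  assumes "\<forall>l<i. l \<in> S \<longleftrightarrow> l \<in> S'" "\<forall>l<i. l \<in> S \<longrightarrow> \<theta> l = \<theta>' l"
  shows "lamv \<mu> \<Phi> tt S \<theta> i = lamv \<mu> \<Phi> tt S' \<theta>' i"
  using assms
proof (induction i rule: less_induct)
  case (less i)
  show ?case
    apply (subst (1 2) lamv.simps)
    apply (rule arg_cong[where f="\<lambda>x. \<mu> + x"])
    apply (rule sum.cong[OF refl])
    using less by auto
qed


locale hs =
  fixes \<mu> :: real and \<Phi> :: "real \<Rightarrow> real" and tt :: "nat \<Rightarrow> real" and n :: nat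
  assumes mu_pos: "\<mu> > 0" and Phi_nn: "\<forall>s\<ge>0. \<Phi> s \<ge> 0" and tt1: "0 < tt 1"
    and ttmono: "\<forall>i\<in>{1..<n}. tt i < tt (Suc i)"
begin

abbreviation "lam \<equiv> lamv \<mu> \<Phi> tt"

definition pts :: "(nat \<Rightarrow> real) \<Rightarrow> nat set \<Rightarrow> (real \<times> real) set" where
  "pts \<theta> S = (\<lambda>j. (tt j, \<theta> j)) ` S"

lemma tt_less_aux: "1 \<le> i \<Longrightarrow> i + Suc d \<le> n \<Longrightarrow> tt i < tt (i + Suc d)"
proof (induction d)
  case 0 then show ?case using ttmono by auto
next
  case (Suc d)
  then have "tt i < tt (i + Suc d)" by simp
  also have "\<dots> < tt (Suc (i + Suc d))" using ttmono Suc.prems by auto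
  finally show ?case by simp
qed

lemma tt_less: "i \<in> {1..n} \<Longrightarrow> j \<in> {1..n} \<Longrightarrow> i < j \<Longrightarrow> tt i < tt j"
  using tt_less_aux[of i "j - i - 1"] by auto

lemma tt_less_iff: "i \<in> {1..n} \<Longrightarrow> j \<in> {1..n} \<Longrightarrow> tt i < tt j \<longleftrightarrow> i < j"
  by (metis less_asym linorder_neqE_nat tt_less)

lemma tt_pos: "i \<in> {1..n} \<Longrightarrow> tt i > 0"
  using tt_less[of 1 i] tt1 by (cases "i = 1") auto

lemma tt_le_n: "i \<in> {1..n} \<Longrightarrow> tt i \<le> tt n"
  using tt_less[of i n] by (cases "i = n") auto

lemma inj_tt: "inj_on tt {1..n}"
  unfolding inj_on_def by (metis less_irrefl linorder_neqE_nat tt_less)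

lemma inj_p: "S \<subseteq> {1..n} \<Longrightarrow> inj_on (\<lambda>j. (tt j, \<theta> j)) S"
  using inj_tt unfolding inj_on_def by auto

lemma lam_sum: "S \<subseteq> {1..n} \<Longrightarrow> i \<in> {1..n} \<Longrightarrow>
  lam S \<theta> i = \<mu> + (\<Sum>j\<in>{j\<in>S. tt j < tt i}. \<Phi> (tt i - tt j) * (if \<theta> j \<le> lam S \<theta> j then 1 else 0))"
proof -
  assume S: "S \<subseteq> {1..n}" and i: "i \<in> {1..n}"
  have e: "{j\<in>S. tt j < tt i} = {..<i} \<inter> S" using S i tt_less_iff by auto
  show ?thesis
    apply (subst lamv.simps)
    unfolding e by (subst sum.inter_restrict) auto
qed

lemma lam_ge: "S \<subseteq> {1..n} \<Longrightarrow> i \<in> {1..n} \<Longrightarrow> lam S \<theta> i \<ge> \<mu>"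
proof -
  assume S: "S \<subseteq> {1..n}" and i: "i \<in> {1..n}"
  have "(\<Sum>j\<in>{j\<in>S. tt j < tt i}. \<Phi> (tt i - tt j) * (if \<theta> j \<le> lam S \<theta> j then 1 else 0)) \<ge> 0"
    using Phi_nn by (intro sum_nonneg) auto
  then show ?thesis using lam_sum[OF S i, of \<theta>] by linarith
qed

lemma sum_pts: "S \<subseteq> {1..n} \<Longrightarrow>
  (\<Sum>y\<in>{y\<in>pts \<theta> S. P (fst y)}. F y) = (\<Sum>j\<in>{j\<in>S. P (tt j)}. F (tt j, \<theta> j))"
proof -
  assume S: "S \<subseteq> {1..n}"
  have e: "{y\<in>pts \<theta> S. P (fst y)} = (\<lambda>j. (tt j, \<theta> j)) ` {j\<in>S. P (tt j)}"
    unfolding pts_def by auto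
  have "inj_on (\<lambda>j. (tt j, \<theta> j)) {j\<in>S. P (tt j)}" using inj_p[OF S] by (rule inj_on_subset) auto
  then show ?thesis unfolding e by (subst sum.reindex) auto
qed

definition L :: "nat set \<Rightarrow> (nat \<Rightarrow> real) \<Rightarrow> real \<Rightarrow> real" where
  "L S \<theta> s = \<mu> + (\<Sum>j\<in>{j\<in>S. tt j < s}. \<Phi> (s - tt j) * (if \<theta> j \<le> lam S \<theta> j then 1 else 0))"

lemma L_at: "S \<subseteq> {1..n} \<Longrightarrow> i \<in> {1..n} \<Longrightarrow> L S \<theta> (tt i) = lam S \<theta> i"
  unfolding L_def by (rule sym, rule lam_sum)

lemma intensity_eq:
  assumes S: "S \<subseteq> {1..n}"
  shows "intensity \<mu> \<Phi> (pts \<theta> S) = L S \<theta>"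
  unfolding intensity_def
proof (rule the_equality)
  have pos: "{j\<in>S. 0 < tt j \<and> tt j < s} = {j\<in>S. tt j < s}" for s using S tt_pos by auto
  show "is_intensity \<mu> \<Phi> (pts \<theta> S) (L S \<theta>)"
    unfolding is_intensity_def
  proof
    fix s
    have "(\<Sum>y\<in>{y \<in> pts \<theta> S. 0 < fst y \<and> fst y < s}. \<Phi> (s - fst y) * (if snd y \<le> L S \<theta> (fst y) then 1 else 0))
      = (\<Sum>j\<in>{j\<in>S. 0 < tt j \<and> tt j < s}. \<Phi> (s - tt j) * (if \<theta> j \<le> L S \<theta> (tt j) then 1 else 0))"
      using sum_pts[OF S, where \<theta>=\<theta> and P="\<lambda>x. 0 < x \<and> x < s" and F="\<lambda>y. \<Phi> (s - fst y) * (if snd y \<le> L S \<theta> (fst y) then 1 else 0)"] by simp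
    also have "\<dots> = (\<Sum>j\<in>{j\<in>S. tt j < s}. \<Phi> (s - tt j) * (if \<theta> j \<le> lam S \<theta> j then 1 else 0))"
      unfolding pos
    proof (intro sum.cong refl)
      fix j assume "j \<in> {j\<in>S. tt j < s}"
      then have j: "j \<in> {1..n}" using S by auto
      show "\<Phi> (s - tt j) * (if \<theta> j \<le> L S \<theta> (tt j) then 1 else 0) = \<Phi> (s - tt j) * (if \<theta> j \<le> lam S \<theta> j then 1 else 0)"
        using L_at[OF S j] by simp
    qed
    finally show "L S \<theta> s = \<mu> + (\<Sum>y\<in>{y \<in> pts \<theta> S. 0 < fst y \<and> fst y < s}. \<Phi> (s - fst y) * (if snd y \<le> L S \<theta> (fst y) then 1 else 0))"
      unfolding L_def by simp
  qed
  fix lm assume lm: "is_intensity \<mu> \<Phi> (pts \<theta> S) lm"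
  have lm': "lm s = \<mu> + (\<Sum>j\<in>{j\<in>S. tt j < s}. \<Phi> (s - tt j) * (if \<theta> j \<le> lm (tt j) then 1 else 0))" for s
  proof -
    have "lm s = \<mu> + (\<Sum>y\<in>{y\<in>pts \<theta> S. 0 < fst y \<and> fst y < s}. \<Phi> (s - fst y) * (if snd y \<le> lm (fst y) then 1 else 0))"
      using lm unfolding is_intensity_def by blast
    also have "\<dots> = \<mu> + (\<Sum>j\<in>{j\<in>S. 0 < tt j \<and> tt j < s}. \<Phi> (s - tt j) * (if \<theta> j \<le> lm (tt j) then 1 else 0))"
      using sum_pts[OF S, where \<theta>=\<theta> and P="\<lambda>x. 0 < x \<and> x < s" and F="\<lambda>y. \<Phi> (s - fst y) * (if snd y \<le> lm (fst y) then 1 else 0)"] by simp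
    finally show ?thesis unfolding pos .
  qed
  have at: "i \<in> S \<Longrightarrow> lm (tt i) = lam S \<theta> i" for i
  proof (induction i rule: less_induct)
    case (less i)
    have "lm (tt i) = \<mu> + (\<Sum>j\<in>{j\<in>S. tt j < tt i}. \<Phi> (tt i - tt j) * (if \<theta> j \<le> lam S \<theta> j then 1 else 0))"
      unfolding lm'[of "tt i"]
    proof (intro arg_cong[where f="\<lambda>x. \<mu> + x"] sum.cong refl)
      fix j assume "j \<in> {j\<in>S. tt j < tt i}"
      then have "j \<in> S" "tt j < tt i" by auto
      moreover have "j \<in> {1..n}" "i \<in> {1..n}" using S less.prems \<open>j \<in> S\<close> by auto
      ultimately have "j \<in> S" "j < i" using tt_less_iff by auto
      then show "\<Phi> (tt i - tt j) * (if \<theta> j \<le> lm (tt j) then 1 else 0) = \<Phi> (tt i - tt j) * (if \<theta> j \<le> lam S \<theta> j then 1 else 0)"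
        using less.IH by simp
    qed
    then show ?case using lam_sum[of S i \<theta>] S less.prems by (simp add: subset_iff)
  qed
  show "lm = L S \<theta>"
  proof
    fix s show "lm s = L S \<theta> s" unfolding lm'[of s] L_def using at by (intro arg_cong[where f="\<lambda>x. \<mu> + x"] sum.cong refl) simp
  qed
qed

lemma intensity_at: "S \<subseteq> {1..n} \<Longrightarrow> i \<in> S \<Longrightarrow> intensity \<mu> \<Phi> (pts \<theta> S) (tt i) = lam S \<theta> i"
proof -
  assume S: "S \<subseteq> {1..n}" and i: "i \<in> S"
  then have "i \<in> {1..n}" by auto
  then show ?thesis using intensity_eq[OF S] L_at[OF S] by simp
qed


lemma Xproc_eq:
  assumes S: "S \<subseteq> {1..n}" and t: "tt n \<le> t"
  shows "Xproc \<mu> \<Phi> \<zeta> t (pts \<theta> S) = (\<Sum>j\<in>S. \<zeta> (t - tt j) * (if \<theta> j \<le> lam S \<theta> j then 1 else 0))"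
proof -
  have "\<forall>j\<in>S. 0 < tt j \<and> tt j \<le> t"
  proof
    fix j assume "j \<in> S"
    then have j: "j \<in> {1..n}" using S by auto
    show "0 < tt j \<and> tt j \<le> t" using tt_pos[OF j] tt_le_n[OF j] t by simp
  qed
  then have e: "{j\<in>S. 0 < tt j \<and> tt j \<le> t} = S" by auto
  have "Xproc \<mu> \<Phi> \<zeta> t (pts \<theta> S) = (\<Sum>j\<in>S. \<zeta> (t - tt j) * (if \<theta> j \<le> intensity \<mu> \<Phi> (pts \<theta> S) (tt j) then 1 else 0))"
    unfolding Xproc_def using sum_pts[OF S, where \<theta>=\<theta> and P="\<lambda>x. 0 < x \<and> x \<le> t" and F="\<lambda>y. \<zeta> (t - fst y) * (if snd y \<le> intensity \<mu> \<Phi> (pts \<theta> S) (fst y) then 1 else 0)"] e by simp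
  also have "\<dots> = (\<Sum>j\<in>S. \<zeta> (t - tt j) * (if \<theta> j \<le> lam S \<theta> j then 1 else 0))"
    using intensity_at[OF S] by (intro sum.cong) auto
  finally show ?thesis .
qed



lemma cn_eq:
  "cn \<mu> \<Phi> \<zeta> t (map (\<lambda>i. (tt i, \<theta> i)) [1..<Suc n]) = Dl {1..n} (\<lambda>S. Xproc \<mu> \<Phi> \<zeta> t (pts \<theta> S))"
proof -
  let ?p = "\<lambda>j. (tt j, \<theta> j)"
  let ?xs = "map ?p [1..<Suc n]"
  have set: "set (sort_key fst ?xs) = ?p ` {1..n}" by auto
  have len: "length (sort_key fst ?xs) = n" by simp
  have P: "Pow (?p ` {1..n}) = image ?p ` Pow {1..n}" by (rule image_Pow_surj[symmetric]) simp
  have inj: "inj_on (image ?p) (Pow {1..n})" by (rule inj_on_image_Pow[OF inj_p]) simp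
  show ?thesis unfolding cn_def Dn_def set len P Dl_def
    apply (subst sum.reindex[OF inj])
  proof (rule sum.cong[OF refl])
    fix S assume "S \<in> Pow {1..n}"
    then have "card (?p ` S) = card S" using card_image[OF inj_p] by blast
    then show "((\<lambda>J. (- 1) ^ (n - card J) * Xproc \<mu> \<Phi> \<zeta> t J) \<circ> (`) ?p) S = (- 1) ^ (card {1..n} - card S) * Xproc \<mu> \<Phi> \<zeta> t (pts \<theta> S)"
      unfolding pts_def by simp
  qed
qed


end



lemma Dl_cong: "(\<And>A. A \<subseteq> I \<Longrightarrow> f A = f' A) \<Longrightarrow> Dl I f = Dl I f'"
  unfolding Dl_def by (intro sum.cong refl) auto

lemma Dl_zero: "Dl I (\<lambda>_. 0) = 0" unfolding Dl_def by simp

context hs begin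

definition G :: "nat \<Rightarrow> (real \<Rightarrow> real) \<Rightarrow> (nat \<Rightarrow> real) \<Rightarrow> real" where
  "G k g \<theta> = Dl {1..k} (\<lambda>S. \<Sum>j\<in>S. g (tt j) * (if \<theta> j \<le> lam S \<theta> j then 1 else 0))"

lemma lam_insert_above: "j \<le> k \<Longrightarrow> lam (insert k A) \<theta> j = lam A \<theta> j"
  by (rule lamv_cong) auto

lemma lam_upd: "lam A (\<theta>(k := y)) k = lam A \<theta> k"
  by (rule lamv_cong) auto

lemma G_step:
  assumes "k \<ge> 1"
  shows "G k g \<theta> = Dl {1..k-1} (\<lambda>A. g (tt k) * (if \<theta> k \<le> lam A \<theta> k then 1 else 0))"
proof -
  have e: "{1..k} = insert k {1..k-1}" using assms by auto
  have "G k g \<theta> = Dl {1..k-1} (\<lambda>A. (\<Sum>j\<in>insert k A. g (tt j) * (if \<theta> j \<le> lam (insert k A) \<theta> j then 1 else 0))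
     - (\<Sum>j\<in>A. g (tt j) * (if \<theta> j \<le> lam A \<theta> j then 1 else 0)))"
    unfolding G_def e by (rule Dl_insert) auto
  also have "\<dots> = Dl {1..k-1} (\<lambda>A. g (tt k) * (if \<theta> k \<le> lam A \<theta> k then 1 else 0))"
  proof (rule Dl_cong)
    fix A assume A: "A \<subseteq> {1..k-1}"
    have kA: "k \<notin> A" "finite A" using A assms finite_subset[OF A] by auto
    have "(\<Sum>j\<in>A. g (tt j) * (if \<theta> j \<le> lam (insert k A) \<theta> j then 1 else 0))
        = (\<Sum>j\<in>A. g (tt j) * (if \<theta> j \<le> lam A \<theta> j then 1 else 0))"
    proof (rule sum.cong[OF refl])
      fix j assume "j \<in> A" then have "j \<le> k" using A by (meson atLeastAtMost_iff diff_le_self le_trans subsetD)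
      then show "g (tt j) * (if \<theta> j \<le> lam (insert k A) \<theta> j then 1 else 0) = g (tt j) * (if \<theta> j \<le> lam A \<theta> j then 1 else 0)"
        using lam_insert_above by simp
    qed
    then show "(\<Sum>j\<in>insert k A. g (tt j) * (if \<theta> j \<le> lam (insert k A) \<theta> j then 1 else 0))
     - (\<Sum>j\<in>A. g (tt j) * (if \<theta> j \<le> lam A \<theta> j then 1 else 0)) = g (tt k) * (if \<theta> k \<le> lam A \<theta> k then 1 else 0)"
      using kA lam_insert_above[of k k A \<theta>] by simp
  qed
  finally show ?thesis .
qed

definition M :: real where
  "M = \<mu> + (\<Sum>i\<in>{1..n}. \<Sum>j\<in>{1..n}. \<bar>\<Phi> (tt i - tt j)\<bar>)"

lemma lam_bound: "S \<subseteq> {1..n} \<Longrightarrow> i \<in> {1..n} \<Longrightarrow> lam S \<theta> i \<le> M"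
proof -
  assume S: "S \<subseteq> {1..n}" and i: "i \<in> {1..n}"
  have "(\<Sum>j\<in>{j\<in>S. tt j < tt i}. \<Phi> (tt i - tt j) * (if \<theta> j \<le> lam S \<theta> j then 1 else 0))
     \<le> (\<Sum>j\<in>{j\<in>S. tt j < tt i}. \<bar>\<Phi> (tt i - tt j)\<bar>)"
    by (intro sum_mono) auto
  also have "\<dots> \<le> (\<Sum>j\<in>{1..n}. \<bar>\<Phi> (tt i - tt j)\<bar>)"
    using S by (intro sum_mono2) auto
  also have "\<dots> \<le> (\<Sum>i\<in>{1..n}. \<Sum>j\<in>{1..n}. \<bar>\<Phi> (tt i - tt j)\<bar>)"
    using i by (intro member_le_sum) (auto intro: sum_nonneg)
  finally show ?thesis using lam_sum[OF S i, of \<theta>] unfolding M_def by linarith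
qed

lemma lam_remove:
  assumes S: "S \<subseteq> {1..n}" and j: "j \<in> {1..n}" and big: "\<theta> j > M"
  shows "i \<in> {1..n} \<Longrightarrow> lam S \<theta> i = lam (S - {j}) \<theta> i"
proof (induction i rule: less_induct)
  case (less i)
  show ?case
    apply (subst (1 2) lamv.simps)
    apply (rule arg_cong[where f="\<lambda>x. \<mu> + x"])
  proof (rule sum.cong[OF refl])
    fix l assume l: "l \<in> {..<i}"
    show "(if l \<in> S then \<Phi> (tt i - tt l) * (if \<theta> l \<le> lam S \<theta> l then 1 else 0) else 0) =
          (if l \<in> S - {j} then \<Phi> (tt i - tt l) * (if \<theta> l \<le> lam (S - {j}) \<theta> l then 1 else 0) else 0)"
    proof (cases "l \<in> S")
      case True
      then have l1: "l \<in> {1..n}" using S by auto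
      show ?thesis
      proof (cases "l = j")
        case True
        then have "lam S \<theta> l < \<theta> l" using lam_bound[OF S l1, of \<theta>] big by simp
        then show ?thesis using True by simp
      next
        case False
        then show ?thesis using less.IH[of l] l l1 \<open>l \<in> S\<close> by simp
      qed
    qed simp
  qed
qed

lemma G_zero:
  assumes k: "k \<le> n" and j: "j \<in> {1..k}" and big: "\<theta> j > M"
  shows "G k g \<theta> = 0"
proof -
  have jn: "j \<in> {1..n}" using j k by auto
  have e: "{1..k} = insert j ({1..k} - {j})" using j by auto
  have "G k g \<theta> = Dl ({1..k} - {j}) (\<lambda>A. (\<Sum>l\<in>insert j A. g (tt l) * (if \<theta> l \<le> lam (insert j A) \<theta> l then 1 else 0))
     - (\<Sum>l\<in>A. g (tt l) * (if \<theta> l \<le> lam A \<theta> l then 1 else 0)))"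
    unfolding G_def by (subst e, rule Dl_insert) auto
  also have "\<dots> = Dl ({1..k} - {j}) (\<lambda>_. 0)"
  proof (rule Dl_cong)
    fix A assume A: "A \<subseteq> {1..k} - {j}"
    then have jA: "j \<notin> A" "finite A" using finite_subset by auto
    have iA: "insert j A \<subseteq> {1..n}" using A jn k by auto
    have "(\<Sum>l\<in>A. g (tt l) * (if \<theta> l \<le> lam (insert j A) \<theta> l then 1 else 0))
        = (\<Sum>l\<in>A. g (tt l) * (if \<theta> l \<le> lam A \<theta> l then 1 else 0))"
    proof (rule sum.cong[OF refl])
      fix l assume "l \<in> A" then have "l \<in> {1..n}" using A k by auto
      then have "lam (insert j A) \<theta> l = lam (insert j A - {j}) \<theta> l"
        using lam_remove[where S="insert j A" and j=j and \<theta>=\<theta>, OF iA jn big] by blast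
      also have "insert j A - {j} = A" using jA by auto
      finally show "g (tt l) * (if \<theta> l \<le> lam (insert j A) \<theta> l then 1 else 0) = g (tt l) * (if \<theta> l \<le> lam A \<theta> l then 1 else 0)"
        by simp
    qed
    moreover have "lam (insert j A) \<theta> j < \<theta> j" using lam_bound[OF iA jn, of \<theta>] big by simp
    ultimately show "(\<Sum>l\<in>insert j A. g (tt l) * (if \<theta> l \<le> lam (insert j A) \<theta> l then 1 else 0))
     - (\<Sum>l\<in>A. g (tt l) * (if \<theta> l \<le> lam A \<theta> l then 1 else 0)) = 0"
      using jA by simp
  qed
  finally show ?thesis by (simp add: Dl_zero)
qed

definition C :: "nat \<Rightarrow> (real \<Rightarrow> real) \<Rightarrow> real" where
  "C k g = (\<Sum>S\<in>Pow {1..k}. \<Sum>j\<in>S. \<bar>g (tt j)\<bar>)"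

lemma C_nonneg: "C k g \<ge> 0"
  unfolding C_def by (intro sum_nonneg) auto

lemma G_bound: "\<bar>G k g \<theta>\<bar> \<le> C k g"
proof -
  have "\<bar>G k g \<theta>\<bar> \<le> (\<Sum>S\<in>Pow {1..k}. \<bar>(-1) ^ (card {1..k} - card S) * (\<Sum>j\<in>S. g (tt j) * (if \<theta> j \<le> lam S \<theta> j then 1 else 0))\<bar>)"
    unfolding G_def Dl_def by (rule sum_abs)
  also have "\<dots> \<le> C k g"
    unfolding C_def
  proof (rule sum_mono)
    fix S assume "S \<in> Pow {1..k}"
    have "\<bar>(-1::real) ^ (card {1..k} - card S) * (\<Sum>j\<in>S. g (tt j) * (if \<theta> j \<le> lam S \<theta> j then 1 else 0))\<bar>
       = \<bar>\<Sum>j\<in>S. g (tt j) * (if \<theta> j \<le> lam S \<theta> j then 1 else 0)\<bar>" by (simp add: abs_mult)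
    also have "\<dots> \<le> (\<Sum>j\<in>S. \<bar>g (tt j) * (if \<theta> j \<le> lam S \<theta> j then 1 else 0)\<bar>)" by (rule sum_abs)
    also have "\<dots> \<le> (\<Sum>j\<in>S. \<bar>g (tt j)\<bar>)" by (intro sum_mono) (auto simp: abs_mult)
    finally show "\<bar>(-1::real) ^ (card {1..k} - card S) * (\<Sum>j\<in>S. g (tt j) * (if \<theta> j \<le> lam S \<theta> j then 1 else 0))\<bar> \<le> (\<Sum>j\<in>S. \<bar>g (tt j)\<bar>)" .
  qed
  finally show ?thesis .
qed

end


context hs begin

lemma lam_meas:
  assumes S: "S \<subseteq> {1..k}"
  shows "(\<lambda>\<theta>. lam S \<theta> i) \<in> borel_measurable (PiM {1..k} (\<lambda>_. lborel))"
proof (induction i rule: less_induct)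
  case (less i)
  have eq: "(\<lambda>\<theta>. lam S \<theta> i) = (\<lambda>\<theta>. \<mu> + (\<Sum>l<i. if l \<in> S then \<Phi> (tt i - tt l) * (if \<theta> l \<le> lam S \<theta> l then 1 else 0) else 0))"
    by (rule ext, subst lamv.simps, rule refl)
  have m: "(\<lambda>\<theta>. if l \<in> S then \<Phi> (tt i - tt l) * (if \<theta> l \<le> lam S \<theta> l then 1 else 0) else 0) \<in> borel_measurable (PiM {1..k} (\<lambda>_. lborel))"
    if l: "l < i" for l
  proof (cases "l \<in> S")
    case True
    then have "l \<in> {1..k}" using S by auto
    then have A[measurable]: "(\<lambda>\<theta>. \<theta> l) \<in> borel_measurable (PiM {1..k} (\<lambda>_. lborel))"
      using measurable_component_singleton[of l "{1..k}" "\<lambda>_. lborel"] by simp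
    have B[measurable]: "(\<lambda>\<theta>. lam S \<theta> l) \<in> borel_measurable (PiM {1..k} (\<lambda>_. lborel))"
      using less.IH[OF l] .
    show ?thesis using True by measurable
  qed simp
  show ?case unfolding eq using m by (intro borel_measurable_add borel_measurable_sum borel_measurable_const) auto
qed

lemma G_meas:
  "G k g \<in> borel_measurable (PiM {1..k} (\<lambda>_. lborel))"
proof -
  have "(\<lambda>\<theta>. (-1) ^ (card {1..k} - card S) * (\<Sum>j\<in>S. g (tt j) * (if \<theta> j \<le> lam S \<theta> j then 1 else 0)))
     \<in> borel_measurable (PiM {1..k} (\<lambda>_. lborel))" if S: "S \<in> Pow {1..k}" for S
  proof -
    have "(\<lambda>\<theta>. g (tt j) * (if \<theta> j \<le> lam S \<theta> j then 1 else 0)) \<in> borel_measurable (PiM {1..k} (\<lambda>_. lborel))"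
      if j: "j \<in> S" for j
    proof -
      have "j \<in> {1..k}" using S j by auto
      then have A[measurable]: "(\<lambda>\<theta>. \<theta> j) \<in> borel_measurable (PiM {1..k} (\<lambda>_. lborel))"
        using measurable_component_singleton[of j "{1..k}" "\<lambda>_. lborel"] by simp
      have B[measurable]: "(\<lambda>\<theta>. lam S \<theta> j) \<in> borel_measurable (PiM {1..k} (\<lambda>_. lborel))"
        using lam_meas S by auto
      show ?thesis by measurable
    qed
    then show ?thesis
      apply -
      apply (rule borel_measurable_times[OF borel_measurable_const])
      apply (rule borel_measurable_sum)
      by blast
  qed
  then have "(\<lambda>\<theta>. \<Sum>S\<in>Pow {1..k}. (-1) ^ (card {1..k} - card S) * (\<Sum>j\<in>S. g (tt j) * (if \<theta> j \<le> lam S \<theta> j then 1 else 0)))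
     \<in> borel_measurable (PiM {1..k} (\<lambda>_. lborel))"
    by (rule borel_measurable_sum)
  then show ?thesis unfolding G_def[abs_def] Dl_def .
qed

lemma F_integrable:
  assumes k: "k \<le> n"
  shows "integrable (PiM {1..k} (\<lambda>_. lborel)) (\<lambda>\<theta>. indicator (PiE {1..k} (\<lambda>_. {0..})) \<theta> * G k g \<theta>)"
proof -
  interpret product_sigma_finite "\<lambda>_. lborel" by standard
  let ?P = "PiM {1..k} (\<lambda>_. lborel)"
  let ?B = "PiE {1..k} (\<lambda>_. {0..M})"
  have "M \<ge> \<mu>" unfolding M_def by (simp add: sum_nonneg)
  then have M0: "M \<ge> 0" using mu_pos by linarith
  have Bs: "?B \<in> sets ?P" by (rule sets_PiM_I_finite) auto
  have "emeasure ?P ?B = (\<Prod>i\<in>{1..k}. emeasure lborel {0..M})"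
    by (rule emeasure_PiM) auto
  also have "\<dots> = (\<Prod>i\<in>{1..k}. ennreal M)" using M0 by simp
  also have "\<dots> = ennreal (M ^ k)" using M0 by (simp add: ennreal_power)
  also have "\<dots> < \<infinity>" by simp
  finally have Bf: "emeasure ?P ?B < \<infinity>" .
  have dom: "integrable ?P (\<lambda>\<theta>. C k g * indicator ?B \<theta>)"
    using Bs Bf by (intro integrable_mult_right integrable_real_indicator)
  have Rs: "PiE {1..k} (\<lambda>_. {0::real..}) \<in> sets ?P" by (rule sets_PiM_I_finite) auto
  have meas: "(\<lambda>\<theta>. indicator (PiE {1..k} (\<lambda>_. {0..})) \<theta> * G k g \<theta>) \<in> borel_measurable ?P"
    using Rs G_meas by (intro borel_measurable_times borel_measurable_indicator) auto
  show ?thesis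
  proof (rule Bochner_Integration.integrable_bound[OF dom meas], rule AE_I2)
    fix \<theta> :: "nat \<Rightarrow> real" assume "\<theta> \<in> space ?P"
    show "norm (indicator (PiE {1..k} (\<lambda>_. {0..})) \<theta> * G k g \<theta>) \<le> norm (C k g * indicator ?B \<theta>)"
    proof (cases "\<theta> \<in> PiE {1..k} (\<lambda>_. {0..})")
      case True
      show ?thesis
      proof (cases "\<forall>j\<in>{1..k}. \<theta> j \<le> M")
        case True2: True
        then have "\<theta> \<in> ?B" using True by (auto simp: PiE_iff)
        then show ?thesis using True G_bound[of k g \<theta>] C_nonneg[of k g] by simp
      next
        case False
        then obtain j where "j \<in> {1..k}" "\<theta> j > M" by auto
        then have "G k g \<theta> = 0" using G_zero k by blast
        then show ?thesis by simp
      qed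
    next
      case False
      then show ?thesis using C_nonneg[of k g] by simp
    qed
  qed
qed

end


lemma ind_Icc: "indicator {0..} y * (if y \<le> L then 1 else 0) = (indicator {0..L} (y::real) :: real)"
  by (simp add: indicator_def)

context hs begin

lemma inner_integral:
  assumes k: "Suc m \<le> n" and x: "x \<in> PiE {1..m} (\<lambda>_. UNIV)"
  shows "(\<integral>y. indicator (PiE {1..Suc m} (\<lambda>_. {0::real..})) (x(Suc m := y)) * G (Suc m) g (x(Suc m := y)) \<partial>(lborel::real measure))
     = indicator (PiE {1..m} (\<lambda>_. {0::real..})) x * g (tt (Suc m)) * Dl {1..m} (\<lambda>A. lam A x (Suc m))"
proof -
  let ?I = "{1..m}"
  let ?R = "PiE {1..m} (\<lambda>_. {0::real..})"
  let ?c = "\<lambda>A. indicator ?R x * ((-1) ^ (card ?I - card A) * g (tt (Suc m)))"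
  have xs: "x (Suc m) = undefined" using x by (auto simp: PiE_def extensional_def)
  have memiff: "x(Suc m := y) \<in> PiE (insert (Suc m) {1..m}) (\<lambda>_. {0::real..}) \<longleftrightarrow> x \<in> ?R \<and> y \<in> {0..}" for y
  proof
    assume h: "x(Suc m := y) \<in> PiE (insert (Suc m) {1..m}) (\<lambda>_. {0::real..})"
    have "(x(Suc m := y))(Suc m := undefined) \<in> ?R"
      by (rule fun_upd_in_PiE[OF _ h]) simp
    moreover have "(x(Suc m := y))(Suc m := undefined) = x" using xs by auto
    moreover have "(x(Suc m := y)) (Suc m) \<in> {0..}" using h by (rule PiE_mem) simp
    ultimately show "x \<in> ?R \<and> y \<in> {0..}" by simp
  next
    assume "x \<in> ?R \<and> y \<in> {0..}"
    then show "x(Suc m := y) \<in> PiE (insert (Suc m) {1..m}) (\<lambda>_. {0::real..})"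
      by (intro PiE_fun_upd) auto
  qed
  have e: "{1..Suc m} = insert (Suc m) {1..m}" by auto
  have ind: "indicator (PiE {1..Suc m} (\<lambda>_. {0::real..})) (x(Suc m := y)) = indicator ?R x * (indicator {0..} y :: real)" for y
    unfolding e indicator_def using memiff[of y] by simp
  have Gx: "G (Suc m) g (x(Suc m := y)) = Dl ?I (\<lambda>A. g (tt (Suc m)) * (if y \<le> lam A x (Suc m) then 1 else 0))" for y
  proof -
    have "G (Suc m) g (x(Suc m := y)) = Dl {1..Suc m - 1} (\<lambda>A. g (tt (Suc m)) * (if (x(Suc m := y)) (Suc m) \<le> lam A (x(Suc m := y)) (Suc m) then 1 else 0))"
      by (rule G_step) simp
    then show ?thesis by (simp only: lam_upd fun_upd_same diff_Suc_1)
  qed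
  have eq: "indicator (PiE {1..Suc m} (\<lambda>_. {0::real..})) (x(Suc m := y)) * G (Suc m) g (x(Suc m := y))
     = (\<Sum>A\<in>Pow ?I. ?c A * indicator {0..lam A x (Suc m)} y)" for y
  proof -
    have "indicator (PiE {1..Suc m} (\<lambda>_. {0::real..})) (x(Suc m := y)) * G (Suc m) g (x(Suc m := y))
      = (\<Sum>A\<in>Pow ?I. indicator ?R x * indicator {0..} y * ((-1) ^ (card ?I - card A) * (g (tt (Suc m)) * (if y \<le> lam A x (Suc m) then 1 else 0))))"
      unfolding ind Gx Dl_def by (rule sum_distrib_left)
    also have "\<dots> = (\<Sum>A\<in>Pow ?I. ?c A * indicator {0..lam A x (Suc m)} y)"
    proof (rule sum.cong[OF refl])
      fix A
      have "indicator ?R x * indicator {0..} y * ((-1) ^ (card ?I - card A) * (g (tt (Suc m)) * (if y \<le> lam A x (Suc m) then 1 else 0)))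
        = ?c A * (indicator {0..} y * (if y \<le> lam A x (Suc m) then 1 else 0))" by (simp only: mult_ac)
      then show "indicator ?R x * indicator {0..} y * ((-1) ^ (card ?I - card A) * (g (tt (Suc m)) * (if y \<le> lam A x (Suc m) then 1 else 0)))
        = ?c A * indicator {0..lam A x (Suc m)} y" by (simp only: ind_Icc)
    qed
    finally show ?thesis .
  qed
  have intg: "integrable lborel (\<lambda>y. ?c A * indicator {0..lam A x (Suc m)} y)" for A
  proof -
    have "integrable lborel (indicator {0..lam A x (Suc m)} :: real \<Rightarrow> real)"
      by (rule integrable_real_indicator) (auto simp: emeasure_lborel_Icc_eq)
    then show ?thesis by (rule integrable_mult_right)
  qed
  have "(\<integral>y. indicator (PiE {1..Suc m} (\<lambda>_. {0::real..})) (x(Suc m := y)) * G (Suc m) g (x(Suc m := y)) \<partial>(lborel::real measure))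
     = (\<integral>y. (\<Sum>A\<in>Pow ?I. ?c A * indicator {0..lam A x (Suc m)} y) \<partial>lborel)"
    unfolding eq ..
  also have "\<dots> = (\<Sum>A\<in>Pow ?I. (\<integral>y. ?c A * indicator {0..lam A x (Suc m)} y \<partial>lborel))"
    by (rule Bochner_Integration.integral_sum) (rule intg)
  also have "\<dots> = (\<Sum>A\<in>Pow ?I. ?c A * lam A x (Suc m))"
  proof (rule sum.cong[OF refl])
    fix A assume "A \<in> Pow ?I"
    then have "A \<subseteq> {1..n}" "Suc m \<in> {1..n}" using k by auto
    then have L0: "lam A x (Suc m) \<ge> 0" using lam_ge[of A "Suc m" x] mu_pos by linarith
    have "(\<integral>y. ?c A * indicator {0..lam A x (Suc m)} y \<partial>lborel) = ?c A * measure lborel ({0..lam A x (Suc m)} \<inter> space lborel)"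
      by (simp only: integral_mult_right_zero Bochner_Integration.integral_indicator)
    also have "\<dots> = ?c A * lam A x (Suc m)" using L0 by simp
    finally show "(\<integral>y. ?c A * indicator {0..lam A x (Suc m)} y \<partial>lborel) = ?c A * lam A x (Suc m)" .
  qed
  also have "\<dots> = indicator ?R x * g (tt (Suc m)) * Dl {1..m} (\<lambda>A. lam A x (Suc m))"
    unfolding Dl_def sum_distrib_left by (intro sum.cong refl) (simp only: mult_ac)
  finally show ?thesis .
qed

lemma Dl_lam:
  assumes k: "Suc m \<le> n" and m: "m \<ge> 1"
  shows "Dl {1..m} (\<lambda>A. lam A x (Suc m)) = G m (\<lambda>s. \<Phi> (tt (Suc m) - s)) x"
proof -
  have "Dl {1..m} (\<lambda>A. lam A x (Suc m)) = Dl {1..m} (\<lambda>A. \<mu> + (\<Sum>j\<in>A. \<Phi> (tt (Suc m) - tt j) * (if x j \<le> lam A x j then 1 else 0)))"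
  proof (rule Dl_cong)
    fix A assume A: "A \<subseteq> {1..m}"
    then have A': "A \<subseteq> {1..n}" "Suc m \<in> {1..n}" using k by auto
    have "{j\<in>A. tt j < tt (Suc m)} = A"
    proof -
      have "\<forall>j\<in>A. tt j < tt (Suc m)"
      proof
        fix j assume "j \<in> A"
        then have "j \<in> {1..n}" "j < Suc m" using A k by auto
        then show "tt j < tt (Suc m)" using tt_less A'(2) by blast
      qed
      then show ?thesis by auto
    qed
    then show "lam A x (Suc m) = \<mu> + (\<Sum>j\<in>A. \<Phi> (tt (Suc m) - tt j) * (if x j \<le> lam A x j then 1 else 0))"
      using lam_sum[OF A'] by simp
  qed
  also have "\<dots> = Dl {1..m} (\<lambda>_. \<mu>) + G m (\<lambda>s. \<Phi> (tt (Suc m) - s)) x"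
    unfolding G_def by (rule Dl_add)
  also have "Dl {1..m} (\<lambda>_. \<mu>) = 0" using m by (intro Dl_const) auto
  finally show ?thesis by simp
qed

lemma F_integral:
  "1 \<le> k \<Longrightarrow> k \<le> n \<Longrightarrow> integral\<^sup>L (PiM {1..k} (\<lambda>_. lborel)) (\<lambda>\<theta>. indicator (PiE {1..k} (\<lambda>_. {0::real..})) \<theta> * G k g \<theta>)
     = \<mu> * g (tt k) * (\<Prod>i\<in>{2..k}. \<Phi> (tt i - tt (i - 1)))"
proof (induction k arbitrary: g)
  case 0 then show ?case by simp
next
  case (Suc m)
  interpret product_sigma_finite "\<lambda>_. lborel" by standard
  have e: "{1..Suc m} = insert (Suc m) {1..m}" by auto
  define F where "F = (\<lambda>\<theta>. indicator (PiE {1..Suc m} (\<lambda>_. {0::real..})) \<theta> * G (Suc m) g \<theta>)"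
  have "integrable (PiM {1..Suc m} (\<lambda>_. lborel)) F" unfolding F_def by (rule F_integrable[OF Suc.prems(2)])
  then have int: "integrable (PiM (insert (Suc m) {1..m}) (\<lambda>_. lborel)) F" by (simp only: e)
  have "integral\<^sup>L (PiM {1..Suc m} (\<lambda>_. lborel)) (\<lambda>\<theta>. indicator (PiE {1..Suc m} (\<lambda>_. {0::real..})) \<theta> * G (Suc m) g \<theta>)
    = integral\<^sup>L (PiM {1..Suc m} (\<lambda>_. lborel)) F" unfolding F_def ..
  also have "\<dots> = (\<integral>x. (\<integral>y. F (x(Suc m := y)) \<partial>(lborel::real measure)) \<partial>PiM {1..m} (\<lambda>_. (lborel::real measure)))"
    unfolding e by (rule product_integral_insert[OF _ _ int]) auto
  also have "\<dots> = (\<integral>x. (\<integral>y. indicator (PiE {1..Suc m} (\<lambda>_. {0::real..})) (x(Suc m := y)) * G (Suc m) g (x(Suc m := y)) \<partial>(lborel::real measure)) \<partial>PiM {1..m} (\<lambda>_. (lborel::real measure)))"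
    unfolding F_def ..
  also have "\<dots> = (\<integral>x. indicator (PiE {1..m} (\<lambda>_. {0::real..})) x * g (tt (Suc m)) * Dl {1..m} (\<lambda>A. lam A x (Suc m)) \<partial>PiM {1..m} (\<lambda>_. (lborel::real measure)))"
  proof (rule Bochner_Integration.integral_cong[OF refl])
    fix x :: "nat \<Rightarrow> real" assume "x \<in> space (PiM {1..m} (\<lambda>_. lborel))"
    then have "x \<in> PiE {1..m} (\<lambda>_. UNIV)" by (simp add: space_PiM)
    then show "(\<integral>y. indicator (PiE {1..Suc m} (\<lambda>_. {0::real..})) (x(Suc m := y)) * G (Suc m) g (x(Suc m := y)) \<partial>(lborel::real measure))
     = indicator (PiE {1..m} (\<lambda>_. {0::real..})) x * g (tt (Suc m)) * Dl {1..m} (\<lambda>A. lam A x (Suc m))"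
      by (rule inner_integral[OF Suc.prems(2)])
  qed
  also have "\<dots> = \<mu> * g (tt (Suc m)) * (\<Prod>i\<in>{2..Suc m}. \<Phi> (tt i - tt (i - 1)))"
  proof (cases "m = 0")
    case True
    have "lam {} x 1 = \<mu>" for x by (subst lamv.simps) simp
    then show ?thesis using True by (simp add: PiM_empty lebesgue_integral_count_space_finite Dl_empty)
  next
    case False
    then have m1: "1 \<le> m" by simp
    have "(\<integral>x. indicator (PiE {1..m} (\<lambda>_. {0::real..})) x * g (tt (Suc m)) * Dl {1..m} (\<lambda>A. lam A x (Suc m)) \<partial>PiM {1..m} (\<lambda>_. (lborel::real measure)))
      = (\<integral>x. g (tt (Suc m)) * (indicator (PiE {1..m} (\<lambda>_. {0::real..})) x * G m (\<lambda>s. \<Phi> (tt (Suc m) - s)) x) \<partial>PiM {1..m} (\<lambda>_. (lborel::real measure)))"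
      using Dl_lam[OF Suc.prems(2) m1] by (simp add: algebra_simps)
    also have "\<dots> = g (tt (Suc m)) * (\<mu> * \<Phi> (tt (Suc m) - tt m) * (\<Prod>i\<in>{2..m}. \<Phi> (tt i - tt (i - 1))))"
      using Suc.IH[OF m1, of "\<lambda>s. \<Phi> (tt (Suc m) - s)"] Suc.prems by simp
    also have "(\<Prod>i\<in>{2..Suc m}. \<Phi> (tt i - tt (i - 1))) = \<Phi> (tt (Suc m) - tt m) * (\<Prod>i\<in>{2..m}. \<Phi> (tt i - tt (i - 1)))"
    proof -
      have "{2..Suc m} = insert (Suc m) {2..m}" using m1 by auto
      then show ?thesis by simp
    qed
    ultimately show ?thesis by (simp add: algebra_simps)
  qed
  finally show ?case .
qed

end

theorem proposition4p6:
  fixes \<mu> t :: real and \<Phi> \<zeta> :: "real \<Rightarrow> real" and n :: nat and tt :: "nat \<Rightarrow> real"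
  assumes "\<mu> > 0"
    and "\<forall>s\<ge>0. \<Phi> s \<ge> 0"
    and "set_integrable lborel {0..} \<Phi>"
    and "(LINT s:{0..}|lborel. \<Phi> s) < 1"
    and "\<zeta> = \<Phi> \<or> \<zeta> = (\<lambda>_. 1)"
    and "t \<ge> 0"
    and "n \<ge> 1"
    and "0 < tt 1"
    and "\<forall>i\<in>{1..<n}. tt i < tt (Suc i)"
    and "tt n \<le> t"
  shows "set_integrable (PiM {1..n} (\<lambda>_. lborel)) (PiE {1..n} (\<lambda>_. {0..}))
           (\<lambda>\<theta>. cn \<mu> \<Phi> \<zeta> t (map (\<lambda>i. (tt i, \<theta> i)) [1..<Suc n]))
       \<and> (LINT \<theta> : PiE {1..n} (\<lambda>_. {0..}) | PiM {1..n} (\<lambda>_. lborel).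
            cn \<mu> \<Phi> \<zeta> t (map (\<lambda>i. (tt i, \<theta> i)) [1..<Suc n]))
         = \<mu> * \<zeta> (t - tt n) * (\<Prod>i\<in>{2..n}. \<Phi> (tt i - tt (i - 1)))"
proof -
  interpret hs \<mu> \<Phi> tt n using assms by unfold_locales auto
  let ?g = "\<lambda>s. \<zeta> (t - s)"
  have pw: "cn \<mu> \<Phi> \<zeta> t (map (\<lambda>i. (tt i, \<theta> i)) [1..<Suc n]) = G n ?g \<theta>" for \<theta>
    unfolding cn_eq G_def
  proof (rule Dl_cong)
    fix S assume "S \<subseteq> {1..n}"
    then show "Xproc \<mu> \<Phi> \<zeta> t (pts \<theta> S) = (\<Sum>j\<in>S. \<zeta> (t - tt j) * (if \<theta> j \<le> lam S \<theta> j then 1 else 0))"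
      using Xproc_eq assms(10) by blast
  qed
  have fe: "(\<lambda>\<theta>. indicator (PiE {1..n} (\<lambda>_. {0::real..})) \<theta> *\<^sub>R cn \<mu> \<Phi> \<zeta> t (map (\<lambda>i. (tt i, \<theta> i)) [1..<Suc n]))
     = (\<lambda>\<theta>. indicator (PiE {1..n} (\<lambda>_. {0::real..})) \<theta> * G n ?g \<theta>)"
    by (rule ext) (simp only: pw real_scaleR_def)
  have I: "integrable (PiM {1..n} (\<lambda>_. lborel)) (\<lambda>\<theta>. indicator (PiE {1..n} (\<lambda>_. {0::real..})) \<theta> * G n ?g \<theta>)"
    by (rule F_integrable) simp
  have V: "integral\<^sup>L (PiM {1..n} (\<lambda>_. lborel)) (\<lambda>\<theta>. indicator (PiE {1..n} (\<lambda>_. {0::real..})) \<theta> * G n ?g \<theta>)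
     = \<mu> * ?g (tt n) * (\<Prod>i\<in>{2..n}. \<Phi> (tt i - tt (i - 1)))"
    by (rule F_integral) (use assms(7) in auto)
  show ?thesis
    unfolding set_integrable_def set_lebesgue_integral_def fe using I V by simp
qed

end
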